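(* Run the cluster decoder (exponential-growth version) on a layer code with an input Pauli-$X$ error $P$ supported on a set $B$ of qubits, and let $C_t$ denote the correction accumulated up to time $t$. Then $P\cdot C_t$ is supported within $\mathrm{Ball}(B,4^t+1)$.
   Context: Layer code: the Williamson–Baspin 3D code built from surface-code layers coupled along line defects. Decoding hypergraph $G$: one vertex per $Z$-check, one hyperedge per qubit containing the $Z$-checks acting on it. The graph metric $d_G$ on qubits is the distance in the dual hypergraph (two qubits adjacent when they share a $Z$-check); $\mathrm{Ball}(x,r)$ is the set of qubits at $d_G$-distance at most $r$ from $x$, and $\mathrm{Ball}(S,r)=\bigcup_{x\in S}\mathrm{Ball}(x,r)$. Cluster decoder: start with one single-vertex active cluster per excited vertex (violated $Z$-check); at steps $t=0,1,\dots$ grow each active cluster to graph radius $4^t$, merge overlapping active clusters, and for each active cluster $T$ that is correctable (some set of hyperedges contained in $T$ meets each excited vertex of $T$ an odd number of times and every other vertex of $T$ an even number of times) apply such a set of qubit flips and deactivate $T$; stop when no active clusters remain. *)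

theory Defs
  imports Main
begin

text \<open>Decoding hypergraph: chk q is the set of Z-checks (vertices) acting on
qubit q (i.e. the hyperedge of q). Pauli-X operators are sets of qubits;
products are symmetric differences.\<close>

definition symdiff :: "'a set \<Rightarrow> 'a set \<Rightarrow> 'a set" where
  "symdiff X Y = (X - Y) \<union> (Y - X)"

definition qadj :: "('q \<Rightarrow> 'c set) \<Rightarrow> ('q \<times> 'q) set" where
  "qadj chk = {(a, b). chk a \<inter> chk b \<noteq> {}}"

definition ball :: "('q \<Rightarrow> 'c set) \<Rightarrow> 'q \<Rightarrow> nat \<Rightarrow> 'q set" where
  "ball chk x r = {y. \<exists>n\<le>r. (x, y) \<in> qadj chk ^^ n}"

definition Ball :: "('q \<Rightarrow> 'c set) \<Rightarrow> 'q set \<Rightarrow> nat \<Rightarrow> 'q set" where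
  "Ball chk S r = (\<Union>x\<in>S. ball chk x r)"

definition syndrome :: "('q::finite \<Rightarrow> 'c set) \<Rightarrow> 'q set \<Rightarrow> 'c set" where
  "syndrome chk X = {c. odd (card {q \<in> X. c \<in> chk q})}"

text \<open>Region of a cluster with seed (excited) vertices E grown to radius r:
qubits within distance r of the hyperedges containing a seed vertex.\<close>
definition region :: "('q \<Rightarrow> 'c set) \<Rightarrow> 'c set \<Rightarrow> nat \<Rightarrow> 'q set" where
  "region chk E r = Ball chk {q. chk q \<inter> E \<noteq> {}} r"

definition corrects :: "('q::finite \<Rightarrow> 'c set) \<Rightarrow> 'q set \<Rightarrow> 'c set \<Rightarrow> 'q set \<Rightarrow> bool" where
  "corrects chk R s F \<longleftrightarrow> F \<subseteq> R \<and>
     (\<forall>v \<in> (\<Union>q\<in>R. chk q). odd (card {q \<in> F. v \<in> chk q}) \<longleftrightarrow> v \<in> s)"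

definition correctable :: "('q::finite \<Rightarrow> 'c set) \<Rightarrow> 'q set \<Rightarrow> 'c set \<Rightarrow> bool" where
  "correctable chk R s \<longleftrightarrow> (\<exists>F. corrects chk R s F)"

text \<open>Merging of active clusters (identified by their seed sets) whose
regions at radius 4^t overlap (transitively).\<close>
definition overlap :: "('q \<Rightarrow> 'c set) \<Rightarrow> nat \<Rightarrow> 'c set set \<Rightarrow> ('c set \<times> 'c set) set" where
  "overlap chk t A = {(E1, E2). E1 \<in> A \<and> E2 \<in> A \<and>
      region chk E1 (4 ^ t) \<inter> region chk E2 (4 ^ t) \<noteq> {}}"

definition merge :: "('q \<Rightarrow> 'c set) \<Rightarrow> nat \<Rightarrow> 'c set set \<Rightarrow> 'c set set" where
  "merge chk t A = (\<lambda>E. \<Union>{E' \<in> A. (E, E') \<in> (overlap chk t A)\<^sup>*}) ` A"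

text \<open>One step t of the decoder: grow to radius 4^t, merge, correct and
deactivate every correctable merged cluster (w.r.t. the current syndrome
of P times the accumulated correction C).\<close>
definition dec_step :: "('q::finite \<Rightarrow> 'c set) \<Rightarrow> 'q set \<Rightarrow> nat \<Rightarrow>
    'c set set \<Rightarrow> 'q set \<Rightarrow> 'c set set \<Rightarrow> 'q set \<Rightarrow> bool" where
  "dec_step chk P t A C A' C' \<longleftrightarrow>
    (let M = merge chk t A;
         s = syndrome chk (symdiff P C);
         D = {T \<in> M. correctable chk (region chk T (4 ^ t)) s}
     in \<exists>F :: 'c set \<Rightarrow> 'q set.
          (\<forall>T \<in> D. corrects chk (region chk T (4 ^ t)) s (F T)) \<and>
          C' = symdiff C {q. odd (card {T \<in> D. q \<in> F T})} \<and>
          A' = M - D)"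

text \<open>A run of the cluster decoder on input error P: act t are the active
clusters at the start of step t, cor t the correction accumulated before
step t (so C_t = cor (Suc t)).\<close>
definition cluster_run :: "('q::finite \<Rightarrow> 'c set) \<Rightarrow> 'q set \<Rightarrow>
    (nat \<Rightarrow> 'c set set) \<Rightarrow> (nat \<Rightarrow> 'q set) \<Rightarrow> bool" where
  "cluster_run chk P act cor \<longleftrightarrow>
     act 0 = (\<lambda>v. {v}) ` syndrome chk P \<and> cor 0 = {} \<and>
     (\<forall>t. dec_step chk P t (act t) (cor t) (act (Suc t)) (cor (Suc t)))"

end

theory Submission
  imports Defs
begin

lemma ball_mono: assumes "r \<le> r'" shows "ball chk x r \<subseteq> ball chk x r'"
proof
  fix y assume "y \<in> ball chk x r"
  then obtain n where "n \<le> r" "(x, y) \<in> qadj chk ^^ n" unfolding ball_def by auto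
  then show "y \<in> ball chk x r'" unfolding ball_def using assms by (intro CollectI exI[of _ n] conjI) auto
qed

lemma Ball_mono: "r \<le> r' \<Longrightarrow> Ball chk S r \<subseteq> Ball chk S r'"
  unfolding Ball_def using ball_mono[of r r' chk] by auto

lemma region_sub:
  fixes chk :: "'q::finite \<Rightarrow> 'c set"
  assumes "E \<subseteq> syndrome chk P" "P \<subseteq> B"
  shows "region chk E r \<subseteq> Ball chk B (r + 1)"
proof
  fix z assume "z \<in> region chk E r"
  then obtain q n where q0: "chk q \<inter> E \<noteq> {}" "n \<le> r" "(q, z) \<in> qadj chk ^^ n"
    unfolding region_def Ball_def ball_def by blast
  then obtain c where q: "c \<in> chk q" "c \<in> E" by blast
  have "c \<in> syndrome chk P" using q assms by blast
  hence "odd (card {p \<in> P. c \<in> chk p})" unfolding syndrome_def by simp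
  hence "{p \<in> P. c \<in> chk p} \<noteq> {}" by (metis card.empty even_zero)
  then obtain p where p: "p \<in> P" "c \<in> chk p" by blast
  have "(p, q) \<in> qadj chk" using p q unfolding qadj_def by blast
  hence pz: "(p, z) \<in> qadj chk ^^ Suc n" using q0(3) by (rule relpow_Suc_I2)
  have le: "Suc n \<le> r + 1" using q0 by simp
  have "z \<in> ball chk p (r + 1)" unfolding ball_def using pz le by blast
  moreover have "p \<in> B" using p assms(2) by blast
  ultimately show "z \<in> Ball chk B (r + 1)"
    unfolding Ball_def by blast
qed

lemma act_inv:
  assumes "cluster_run chk P act cor"
  shows "\<forall>E \<in> act t. E \<subseteq> syndrome chk P"
proof (induction t)
  case 0
  then show ?case using assms unfolding cluster_run_def by auto
next
  case (Suc t)
  from assms have "dec_step chk P t (act t) (cor t) (act (Suc t)) (cor (Suc t))"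
    unfolding cluster_run_def by blast
  hence "act (Suc t) \<subseteq> merge chk t (act t)"
    unfolding dec_step_def Let_def by blast
  moreover have "\<forall>E \<in> merge chk t (act t). E \<subseteq> syndrome chk P"
    using Suc unfolding merge_def by blast
  ultimately show ?case by blast
qed

lemma step_sub:
  fixes chk :: "'q::finite \<Rightarrow> 'c set"
  assumes "P \<subseteq> B" "cluster_run chk P act cor"
  shows "cor (Suc t) \<subseteq> cor t \<union> Ball chk B (4 ^ t + 1)"
proof -
  let ?M = "merge chk t (act t)"
  let ?s = "syndrome chk (symdiff P (cor t))"
  let ?D = "{T \<in> ?M. correctable chk (region chk T (4 ^ t)) ?s}"
  from assms have "dec_step chk P t (act t) (cor t) (act (Suc t)) (cor (Suc t))"
    unfolding cluster_run_def by blast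
  hence "\<exists>F. (\<forall>T \<in> ?D. corrects chk (region chk T (4 ^ t)) ?s (F T)) \<and>
      cor (Suc t) = symdiff (cor t) {q. odd (card {T \<in> ?D. q \<in> F T})}"
    unfolding dec_step_def Let_def by meson
  then obtain F where F: "\<forall>T \<in> ?D. corrects chk (region chk T (4 ^ t)) ?s (F T)"
    and C: "cor (Suc t) = symdiff (cor t) {q. odd (card {T \<in> ?D. q \<in> F T})}"
    by blast
  have Ms: "\<forall>E \<in> ?M. E \<subseteq> syndrome chk P"
    using act_inv[OF assms(2), of t] unfolding merge_def by blast
  have X: "{q. odd (card {T \<in> ?D. q \<in> F T})} \<subseteq> Ball chk B (4 ^ t + 1)"
  proof
    fix q assume "q \<in> {q. odd (card {T \<in> ?D. q \<in> F T})}"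
    hence "{T \<in> ?D. q \<in> F T} \<noteq> {}" by (metis (no_types, lifting) card.empty even_zero mem_Collect_eq)
    then obtain T where T: "T \<in> ?D" "q \<in> F T" by blast
    have "F T \<subseteq> region chk T (4 ^ t)" using F T(1) unfolding corrects_def by blast
    hence "q \<in> region chk T (4 ^ t)" using T(2) by blast
    moreover have "T \<subseteq> syndrome chk P" using Ms T(1) by blast
    ultimately show "q \<in> Ball chk B (4 ^ t + 1)" using region_sub[OF _ assms(1)] by blast
  qed
  have "symdiff (cor t) {q. odd (card {T \<in> ?D. q \<in> F T})} \<subseteq> cor t \<union> {q. odd (card {T \<in> ?D. q \<in> F T})}"
    unfolding symdiff_def by (rule Un_mono; rule Diff_subset)
  then show ?thesis using C X by blast
qed

lemma cor_inv:
  fixes chk :: "'q::finite \<Rightarrow> 'c set"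
  assumes "P \<subseteq> B" "cluster_run chk P act cor"
  shows "cor t \<subseteq> Ball chk B (4 ^ t + 1)"
proof (induction t)
  case 0
  then show ?case using assms unfolding cluster_run_def by auto
next
  case (Suc t)
  have mono: "Ball chk B (4 ^ t + 1) \<subseteq> Ball chk B (4 ^ Suc t + 1)"
    by (rule Ball_mono) simp
  show ?case using step_sub[OF assms, of t] Suc mono by blast
qed

theorem lemma8:
  fixes chk :: "'q::finite \<Rightarrow> 'c::finite set"
    and P B :: "'q set"
    and act :: "nat \<Rightarrow> 'c set set" and cor :: "nat \<Rightarrow> 'q set"
    and t :: nat
  assumes "P \<subseteq> B"
    and "cluster_run chk P act cor"
  shows "symdiff P (cor (Suc t)) \<subseteq> Ball chk B (4 ^ t + 1)"
proof -
  have C: "cor (Suc t) \<subseteq> Ball chk B (4 ^ t + 1)"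
    using step_sub[OF assms, of t] cor_inv[OF assms, of t] by blast
  have "P \<subseteq> Ball chk B (4 ^ t + 1)"
  proof
    fix p assume p: "p \<in> P"
    have "(p, p) \<in> qadj chk ^^ 0" by simp
    hence "p \<in> ball chk p (4 ^ t + 1)" unfolding ball_def by (intro CollectI exI[of _ 0]) simp
    moreover have "p \<in> B" using p assms(1) by blast
    ultimately show "p \<in> Ball chk B (4 ^ t + 1)" unfolding Ball_def by blast
  qed
  moreover have "symdiff P (cor (Suc t)) \<subseteq> P \<union> cor (Suc t)"
    unfolding symdiff_def by (rule Un_mono; rule Diff_subset)
  ultimately show ?thesis using C by blast
qed

end
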